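(* Let $H$ be a Kekul\'ean hexagonal system and $n\ge0$. The map $f$ from the set of Clar covers of $H$ with exactly $n$ hexagons to the set of induced subgraphs of $R(H)$ isomorphic to $Q_n$ is surjective: for every induced subgraph $G_n$ of $R(H)$ isomorphic to $Q_n$ there is a Clar cover $C$ of $H$ with exactly $n$ hexagons such that $f(C)=G_n$.
   Context: A hexagonal system is a 2-connected finite plane graph in which every interior face is a regular hexagon of side length one; its hexagons are the boundaries of its interior faces; it is Kekul\'ean if it has a perfect matching. A Clar cover of $H$ is a spanning subgraph each of whose components is a hexagon of $H$ or a single edge. The resonance graph $R(H)$ has the perfect matchings of $H$ as vertices, two adjacent iff their symmetric difference is the edge set of a hexagon of $H$. For a Clar cover $C$, $f(C)$ denotes the subgraph of $R(H)$ induced by all perfect matchings $M$ of $H$ such that every hexagon component of $C$ is $M$-alternating and every single-edge component of $C$ belongs to $M$. *)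

theory Defs
  imports Main
begin

text \<open>
  Cells (unit hexagons of the regular hexagonal tiling of the plane)
  are indexed by their centres, written in axial coordinates of the triangular lattice.
  Two cells are neighbours (share an edge) iff their coordinates differ by one of six
  vectors.  A vertex of the honeycomb is represented by the set of the three cells
  meeting at it (a triangle of pairwise neighbouring cells), and an edge of the honeycomb
  by the two-element set of its end vertices.
\<close>

type_synonym cell = "int \<times> int"
type_synonym hvertex = "cell set"
type_synonym hedge = "hvertex set"

definition nbr :: "cell \<Rightarrow> cell \<Rightarrow> bool" where
  "nbr c d \<longleftrightarrow> (fst d - fst c, snd d - snd c) \<in>
     {(1,0), (-1,0), (0,1), (0,-1), (1,-1), (-1,1)}"

definition lattice_vertex :: "hvertex \<Rightarrow> bool" where
  "lattice_vertex T \<longleftrightarrow> card T = 3 \<and> (\<forall>c\<in>T. \<forall>d\<in>T. c \<noteq> d \<longrightarrow> nbr c d)"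

definition hex_vertices :: "cell \<Rightarrow> hvertex set" where
  "hex_vertices c = {T. lattice_vertex T \<and> c \<in> T}"

definition hex_edges :: "cell \<Rightarrow> hedge set" where
  "hex_edges c = {{u, v} | u v. u \<in> hex_vertices c \<and> v \<in> hex_vertices c \<and> card (u \<inter> v) = 2}"

text \<open>
  A hexagonal system is given by the finite nonempty set S of its hexagons (interior faces),
  placed in the hexagonal lattice.  The graph is the union of the boundaries of these
  hexagons.  2-connectedness of the graph corresponds to S being edge-connected, and the
  requirement that every interior face is a unit hexagon of the system corresponds to the
  complement of S (in the lattice) being edge-connected (no holes).
\<close>

definition cells_connected :: "cell set \<Rightarrow> bool" where
  "cells_connected A \<longleftrightarrow>
     (\<forall>c\<in>A. \<forall>d\<in>A. (\<lambda>x y. x \<in> A \<and> y \<in> A \<and> nbr x y)\<^sup>*\<^sup>* c d)"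

definition hexagonal_system :: "cell set \<Rightarrow> bool" where
  "hexagonal_system S \<longleftrightarrow> finite S \<and> S \<noteq> {} \<and> cells_connected S \<and> cells_connected (- S)"

definition HV :: "cell set \<Rightarrow> hvertex set" where
  "HV S = (\<Union>c\<in>S. hex_vertices c)"

definition HE :: "cell set \<Rightarrow> hedge set" where
  "HE S = (\<Union>c\<in>S. hex_edges c)"

definition perfect_matching :: "cell set \<Rightarrow> hedge set \<Rightarrow> bool" where
  "perfect_matching S M \<longleftrightarrow> M \<subseteq> HE S \<and> (\<forall>v\<in>HV S. \<exists>!e. e \<in> M \<and> v \<in> e)"

definition kekulean :: "cell set \<Rightarrow> bool" where
  "kekulean S \<longleftrightarrow> (\<exists>M. perfect_matching S M)"

text \<open>Hexagon c is M-alternating: its edges alternate between M and not M, i.e.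
  the edges of c in M form a perfect matching of the 6-cycle c.\<close>
definition alternating :: "hedge set \<Rightarrow> cell \<Rightarrow> bool" where
  "alternating M c \<longleftrightarrow> (\<forall>v\<in>hex_vertices c. \<exists>!e. e \<in> M \<inter> hex_edges c \<and> v \<in> e)"

definition res_adj :: "cell set \<Rightarrow> hedge set \<Rightarrow> hedge set \<Rightarrow> bool" where
  "res_adj S M M' \<longleftrightarrow> perfect_matching S M \<and> perfect_matching S M' \<and>
     (\<exists>c\<in>S. (M - M') \<union> (M' - M) = hex_edges c)"

definition cube_adj :: "nat set \<Rightarrow> nat set \<Rightarrow> bool" where
  "cube_adj A B \<longleftrightarrow> card ((A - B) \<union> (B - A)) = 1"

definition induced_iso_cube :: "cell set \<Rightarrow> hedge set set \<Rightarrow> nat \<Rightarrow> bool" where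
  "induced_iso_cube S W n \<longleftrightarrow>
     (\<exists>\<phi>. bij_betw \<phi> (Pow {..<n}) W \<and>
        (\<forall>A\<in>Pow {..<n}. \<forall>B\<in>Pow {..<n}. cube_adj A B \<longleftrightarrow> res_adj S (\<phi> A) (\<phi> B)))"

text \<open>
  A Clar cover is a spanning subgraph whose components are hexagons of H or single edges.
  It is represented by the set K of its hexagon components and the set F of its
  single-edge components; the component condition says these are pairwise vertex-disjoint,
  and spanning means they cover all vertices.
\<close>
definition clar_cover :: "cell set \<Rightarrow> cell set \<Rightarrow> hedge set \<Rightarrow> bool" where
  "clar_cover S K F \<longleftrightarrow> K \<subseteq> S \<and> F \<subseteq> HE S \<and>
     (\<forall>c\<in>K. \<forall>d\<in>K. c \<noteq> d \<longrightarrow> hex_vertices c \<inter> hex_vertices d = {}) \<and>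
     (\<forall>e\<in>F. \<forall>e'\<in>F. e \<noteq> e' \<longrightarrow> e \<inter> e' = {}) \<and>
     (\<forall>e\<in>F. \<forall>c\<in>K. e \<inter> hex_vertices c = {}) \<and>
     HV S = (\<Union>c\<in>K. hex_vertices c) \<union> \<Union>F"

text \<open>Vertex set of f(C) (f(C) is the induced subgraph of R(H) on this set).\<close>
definition clar_set :: "cell set \<Rightarrow> cell set \<Rightarrow> hedge set \<Rightarrow> hedge set set" where
  "clar_set S K F = {M. perfect_matching S M \<and> (\<forall>c\<in>K. alternating M c) \<and> F \<subseteq> M}"

end

theory Submission
  imports Defs
begin

definition dirs :: "(int \<times> int) list" where
  "dirs = [(1,0),(0,1),(-1,1),(-1,0),(0,-1),(1,-1)]"
definition nb :: "nat \<Rightarrow> cell \<Rightarrow> cell" where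
  "nb k c = (fst c + fst (dirs ! (k mod 6)), snd c + snd (dirs ! (k mod 6)))"
lemma ex6: "(\<exists>k<6. P (k::nat)) \<longleftrightarrow> P 0 \<or> P 1 \<or> P 2 \<or> P 3 \<or> P 4 \<or> P 5"
  by (auto simp: less_Suc_eq numeral_eq_Suc)
lemma all6: "(\<forall>k<6. P (k::nat)) \<longleftrightarrow> P 0 \<and> P 1 \<and> P 2 \<and> P 3 \<and> P 4 \<and> P 5"
proof -
  have "(\<forall>k<6. P (k::nat)) \<longleftrightarrow> \<not>(\<exists>k<6. \<not> P k)" by blast
  then show ?thesis unfolding ex6 by blast
qed
lemma six_cases: "(k::nat) < 6 \<Longrightarrow> k = 0 \<or> k = 1 \<or> k = 2 \<or> k = 3 \<or> k = 4 \<or> k = 5"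
  by presburger

lemma nb_vals:
  "nb 0 (a,b) = (a+1,b)" "nb 1 (a,b) = (a,b+1)" "nb 2 (a,b) = (a-1,b+1)"
  "nb 3 (a,b) = (a-1,b)" "nb 4 (a,b) = (a,b-1)" "nb 5 (a,b) = (a+1,b-1)" "nb 6 (a,b) = (a+1,b)"
  by (simp_all add: nb_def dirs_def)

lemma nb_mod: "nb (k mod 6) c = nb k c"
  by (simp add: nb_def)

lemma nbr_iff: "nbr c d \<longleftrightarrow> (\<exists>k<6. d = nb k c)"
proof -
  obtain a b where c: "c = (a,b)" by (cases c)
  obtain x y where d: "d = (x,y)" by (cases d)
  have e: "(x - a, y - b) = (p,q) \<longleftrightarrow> (x,y) = (a+p,b+q)" for p q :: int by auto
  show ?thesis
    unfolding c d nbr_def ex6 nb_vals insert_iff e empty_iff fst_conv snd_conv by (simp, blast)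
qed

lemma nb_nbr_all: "\<forall>i<6. \<forall>j<6. nbr (nb i (a,b)) (nb j (a,b)) \<longleftrightarrow> (j = Suc i mod 6 \<or> i = Suc j mod 6)"
  unfolding all6 nb_vals nbr_def by simp

lemma nb_nbr: "i < 6 \<Longrightarrow> j < 6 \<Longrightarrow> nbr (nb i c) (nb j c) \<longleftrightarrow> (j = Suc i mod 6 \<or> i = Suc j mod 6)"
  using nb_nbr_all[of "fst c" "snd c"] by simp

lemma nb_inj_all: "\<forall>i<6. \<forall>j<6. nb i (a,b) = nb j (a,b) \<longrightarrow> i = j"
  unfolding all6 nb_vals by simp

lemma nb_inj: "i < 6 \<Longrightarrow> j < 6 \<Longrightarrow> nb i c = nb j c \<longleftrightarrow> i = j"
  using nb_inj_all[of "fst c" "snd c"] by auto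

lemma nb_ne: "nb k c \<noteq> c"
proof -
  have "\<forall>k<6. nb k (a,b) \<noteq> (a,b)" for a b unfolding all6 nb_vals by simp
  then show ?thesis using nb_mod[of k c] by (metis prod.collapse mod_less_divisor zero_less_numeral)
qed

lemma nbr_sym: "nbr d e \<Longrightarrow> nbr e d"
proof -
  assume "nbr d e"
  then have h: "(fst e - fst d, snd e - snd d) \<in> {(1,0), (-1,0), (0,1), (0,-1), (1,-1), (-1,1)}" unfolding nbr_def .
  have "(fst d - fst e, snd d - snd e) = (- (fst e - fst d), - (snd e - snd d))" by simp
  moreover have "\<And>(p::int) (q::int). (p,q) \<in> {(1,0), (-1,0), (0,1), (0,-1), (1,-1), (-1,1)} \<Longrightarrow> (-p,-q) \<in> {(1,0), (-1,0), (0,1), (0,-1), (1,-1), (-1,1)}"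
    by (elim insertE emptyE; simp)
  ultimately show ?thesis using h unfolding nbr_def by metis
qed

definition V :: "nat \<Rightarrow> cell \<Rightarrow> hvertex" where
  "V k c = {c, nb k c, nb (Suc k) c}"

definition E :: "nat \<Rightarrow> cell \<Rightarrow> hedge" where
  "E k c = {V k c, V (Suc k) c}"

lemma nb_Suc_mod: "nb (Suc (k mod 6)) c = nb (Suc k) c"
proof -
  have "nb (Suc (k mod 6)) c = nb (Suc (k mod 6) mod 6) c" by (simp only: nb_mod)
  also have "Suc (k mod 6) mod 6 = Suc k mod 6" by (simp add: mod_Suc_eq)
  also have "nb (Suc k mod 6) c = nb (Suc k) c" by (simp only: nb_mod)
  finally show ?thesis .
qed

lemma V_mod: "V (k mod 6) c = V k c"
  unfolding V_def by (simp only: nb_mod nb_Suc_mod)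

lemma V_Suc_mod: "V (Suc (k mod 6)) c = V (Suc k) c"
proof -
  have "V (Suc (k mod 6)) c = V (Suc (k mod 6) mod 6) c" by (simp only: V_mod)
  also have "Suc (k mod 6) mod 6 = Suc k mod 6" by (simp add: mod_Suc_eq)
  also have "V (Suc k mod 6) c = V (Suc k) c" by (simp only: V_mod)
  finally show ?thesis .
qed

lemma E_mod: "E (k mod 6) c = E k c"
  unfolding E_def by (simp only: V_mod V_Suc_mod)

lemma nb_Suc_ne: "nb k c \<noteq> nb (Suc k) c"
proof -
  have "\<forall>k<6. nb k (a,b) \<noteq> nb (Suc k) (a,b)" for a b
    unfolding all6 by (simp add: nb_def dirs_def)
  then have "nb (k mod 6) c \<noteq> nb (Suc (k mod 6)) c"
    by (metis prod.collapse mod_less_divisor zero_less_numeral)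
  then show ?thesis by (metis nb_mod nb_Suc_mod)
qed

lemma card_V: "card (V k c) = 3"
  unfolding V_def using nb_ne[of k c] nb_ne[of "Suc k" c] nb_Suc_ne[of k c]
  by (simp add: eq_commute)

lemma lattice_V: "lattice_vertex (V k c)"
proof -
  have m: "k mod 6 < 6" "Suc k mod 6 < 6" by auto
  have 1: "nbr c (nb k c)" using nbr_iff[of c "nb k c"] nb_mod[of k c] m(1) by metis
  have 2: "nbr c (nb (Suc k) c)" using nbr_iff[of c "nb (Suc k) c"] nb_mod[of "Suc k" c] m(2) by metis
  have "nbr (nb (k mod 6) c) (nb (Suc k mod 6) c)"
    using nb_nbr[OF m, of c] by (simp add: mod_Suc_eq)
  then have 3: "nbr (nb k c) (nb (Suc k) c)" by (simp only: nb_mod)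
  have "\<forall>x\<in>{c, nb k c, nb (Suc k) c}. \<forall>y\<in>{c, nb k c, nb (Suc k) c}. x \<noteq> y \<longrightarrow> nbr x y"
    using 1 2 3 nbr_sym[OF 1] nbr_sym[OF 2] nbr_sym[OF 3] by simp
  then show ?thesis unfolding lattice_vertex_def using card_V[of k c] unfolding V_def by blast
qed

lemma hex_vertices_eq: "hex_vertices c = (\<lambda>k. V k c) ` {..<6}"
proof
  show "(\<lambda>k. V k c) ` {..<6} \<subseteq> hex_vertices c"
  proof
    fix T assume "T \<in> (\<lambda>k. V k c) ` {..<6}"
    then obtain k where "T = V k c" by auto
    then show "T \<in> hex_vertices c" unfolding hex_vertices_def using lattice_V by (simp add: V_def)
  qed
next
  show "hex_vertices c \<subseteq> (\<lambda>k. V k c) ` {..<6}"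
  proof
    fix T assume "T \<in> hex_vertices c"
    then have L: "lattice_vertex T" and cT: "c \<in> T" unfolding hex_vertices_def by auto
    then have "card (T - {c}) = 2" unfolding lattice_vertex_def
      using card_Diff_singleton[OF cT] by simp
    then obtain x y where xy: "T - {c} = {x,y}" "x \<noteq> y" by (auto simp: card_2_iff)
    then have T: "T = {c,x,y}" and xc: "x \<noteq> c" "y \<noteq> c" "x \<in> T" "y \<in> T" using cT by auto
    have "nbr c x" "nbr c y" "nbr x y" using L xc xy(2) cT unfolding lattice_vertex_def by auto
    then obtain i j where ij: "i < 6" "j < 6" "x = nb i c" "y = nb j c" using nbr_iff by metis
    with \<open>nbr x y\<close> have "j = Suc i mod 6 \<or> i = Suc j mod 6" using nb_nbr by blast
    then show "T \<in> (\<lambda>k. V k c) ` {..<6}"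
    proof
      assume "j = Suc i mod 6"
      then have "T = V i c" unfolding T V_def ij by (simp add: nb_mod)
      then show ?thesis using ij by auto
    next
      assume "i = Suc j mod 6"
      then have "T = V j c" unfolding T V_def ij by (simp add: nb_mod insert_commute)
      then show ?thesis using ij by auto
    qed
  qed
qed

lemma V_conc1: "\<forall>i<6. \<forall>j<6. nb i (a,b) \<in> V j (a,b) \<longrightarrow> nb (Suc i) (a,b) \<in> V j (a,b) \<longrightarrow> i = j"
  unfolding all6 by (simp add: V_def nb_def dirs_def)
lemma V_conc2: "\<forall>i<6. \<forall>j<6. j \<noteq> Suc i mod 6 \<longrightarrow> i \<noteq> Suc j mod 6 \<longrightarrow> i\<noteq>j \<longrightarrow> nb i (a,b) \<notin> V j (a,b) \<and> nb (Suc i) (a,b) \<notin> V j (a,b)"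
  unfolding all6 by (simp add: V_def nb_def dirs_def)
lemma V_conc3: "\<forall>i<6. nb i (a,b) \<notin> V (Suc i) (a,b) \<and> nb (Suc (Suc i)) (a,b) \<notin> V i (a,b)"
  unfolding all6 by (simp add: V_def nb_def dirs_def)

lemma V_c1: "i<6 \<Longrightarrow> j<6 \<Longrightarrow> nb i c \<in> V j c \<Longrightarrow> nb (Suc i) c \<in> V j c \<Longrightarrow> i = j"
  using V_conc1[of "fst c" "snd c"] by simp
lemma V_c2: "i<6 \<Longrightarrow> j<6 \<Longrightarrow> j \<noteq> Suc i mod 6 \<Longrightarrow> i \<noteq> Suc j mod 6 \<Longrightarrow> i\<noteq>j \<Longrightarrow> nb i c \<notin> V j c \<and> nb (Suc i) c \<notin> V j c"
  using V_conc2[of "fst c" "snd c"] by simp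
lemma V_c3: "i<6 \<Longrightarrow> nb i c \<notin> V (Suc i) c \<and> nb (Suc (Suc i)) c \<notin> V i c"
  using V_conc3[of "fst c" "snd c"] by simp

lemma V_eq: "i < 6 \<Longrightarrow> j < 6 \<Longrightarrow> V i c = V j c \<longleftrightarrow> i = j"
proof
  assume "i < 6" "j < 6" "V i c = V j c"
  moreover have "nb i c \<in> V i c" "nb (Suc i) c \<in> V i c" by (simp_all add: V_def)
  ultimately show "i = j" using V_c1 by metis
qed simp
lemma V_eq_any: "V i c = V j c \<longleftrightarrow> i mod 6 = j mod 6"
  using V_eq[of "i mod 6" "j mod 6" c] by (simp add: V_mod)

lemma V_int_far: "i < 6 \<Longrightarrow> j < 6 \<Longrightarrow> i \<noteq> j \<Longrightarrow> j \<noteq> Suc i mod 6 \<Longrightarrow> i \<noteq> Suc j mod 6 \<Longrightarrow>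
    V i c \<inter> V j c = {c}"
proof -
  assume a: "i < 6" "j < 6" "i \<noteq> j" "j \<noteq> Suc i mod 6" "i \<noteq> Suc j mod 6"
  then have "nb i c \<notin> V j c" "nb (Suc i) c \<notin> V j c" using V_c2 by blast+
  then show ?thesis unfolding V_def[of i] by (auto simp: V_def)
qed

lemma V_int_adj: "V k c \<inter> V (Suc k) c = {c, nb (Suc k) c}"
proof -
  have "V (k mod 6) c \<inter> V (Suc (k mod 6)) c = {c, nb (Suc (k mod 6)) c}"
  proof -
    have m: "k mod 6 < 6" by simp
    have "nb (k mod 6) c \<notin> V (Suc (k mod 6)) c" "nb (Suc (Suc (k mod 6))) c \<notin> V (k mod 6) c"
      using V_c3[OF m] by auto
    then show ?thesis unfolding V_def[of "k mod 6"] by (auto simp: V_def)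
  qed
  then show ?thesis by (simp only: V_mod V_Suc_mod nb_Suc_mod)
qed

lemma card_V_int_adj: "card (V k c \<inter> V (Suc k) c) = 2"
  unfolding V_int_adj using nb_ne[of "Suc k" c] by (simp add: eq_commute)

lemma V_in_hex: "V k c \<in> hex_vertices c"
  unfolding hex_vertices_eq by (metis V_mod image_eqI lessThan_iff mod_less_divisor zero_less_numeral)

lemma hex_edges_eq: "hex_edges c = (\<lambda>k. E k c) ` {..<6}"
proof
  show "(\<lambda>k. E k c) ` {..<6} \<subseteq> hex_edges c"
  proof
    fix e assume "e \<in> (\<lambda>k. E k c) ` {..<6}"
    then obtain k where "e = E k c" by blast
    then show "e \<in> hex_edges c"
      unfolding hex_edges_def E_def using V_in_hex[of k c] V_in_hex[of "Suc k" c] card_V_int_adj[of k c] by blast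
  qed
next
  show "hex_edges c \<subseteq> (\<lambda>k. E k c) ` {..<6}"
  proof
    fix e assume "e \<in> hex_edges c"
    then obtain u v where e: "e = {u,v}" "u \<in> hex_vertices c" "v \<in> hex_vertices c" "card (u \<inter> v) = 2"
      unfolding hex_edges_def by blast
    obtain i where i: "i < 6" "u = V i c" using e(2) unfolding hex_vertices_eq by blast
    obtain j where j: "j < 6" "v = V j c" using e(3) unfolding hex_vertices_eq by blast
    have "i \<noteq> j"
    proof
      assume "i = j"
      then have "u \<inter> v = V i c" using i j by simp
      then show False using e(4) card_V[of i c] by simp
    qed
    moreover have "\<not> (j \<noteq> Suc i mod 6 \<and> i \<noteq> Suc j mod 6)"
    proof
      assume "j \<noteq> Suc i mod 6 \<and> i \<noteq> Suc j mod 6"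
      then have "u \<inter> v = {c}" using V_int_far[of i j c] i j \<open>i \<noteq> j\<close> by simp
      then show False using e(4) by simp
    qed
    ultimately have "j = Suc i mod 6 \<or> i = Suc j mod 6" by blast
    then show "e \<in> (\<lambda>k. E k c) ` {..<6}"
    proof
      assume "j = Suc i mod 6"
      then have "e = E i c" unfolding e i j E_def by (simp only: V_mod)
      then show ?thesis using i by blast
    next
      assume "i = Suc j mod 6"
      then have "e = E j c" unfolding e i j E_def by (simp only: V_mod insert_commute)
      then show ?thesis using j by blast
    qed
  qed
qed

lemma Suc_mod6: "Suc a mod 6 = Suc b mod 6 \<Longrightarrow> a mod 6 = b mod 6"
  by (auto simp: mod_Suc split: if_splits)

lemma nb_eq_any: "nb i c = nb j c \<longleftrightarrow> i mod 6 = j mod 6"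
  using nb_inj[of "i mod 6" "j mod 6" c] by (simp add: nb_mod)

lemma E_eq_any: "E i c = E j c \<longleftrightarrow> i mod 6 = j mod 6"
proof
  assume "E i c = E j c"
  then have "V i c \<inter> V (Suc i) c = V j c \<inter> V (Suc j) c"
    unfolding E_def by (auto simp: doubleton_eq_iff Int_commute)
  then have "{c, nb (Suc i) c} = {c, nb (Suc j) c}" by (simp only: V_int_adj)
  then have "nb (Suc i) c = nb (Suc j) c" using nb_ne[of "Suc i" c] nb_ne[of "Suc j" c]
    by (auto simp: doubleton_eq_iff)
  then show "i mod 6 = j mod 6" unfolding nb_eq_any by (rule Suc_mod6)
next
  assume "i mod 6 = j mod 6"
  then show "E i c = E j c" by (metis E_mod)
qed

lemma finite_hex: "finite (hex_edges c)"
  unfolding hex_edges_eq by simp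

lemma card_hex: "card (hex_edges c) = 6"
proof -
  have "inj_on (\<lambda>k. E k c) {..<6}" unfolding inj_on_def E_eq_any by simp
  then show ?thesis unfolding hex_edges_eq by (simp add: card_image)
qed

lemma hex_edge_struct: "e \<in> hex_edges c \<Longrightarrow> \<exists>u v. e = {u,v} \<and> u \<noteq> v \<and> u \<in> hex_vertices c \<and> v \<in> hex_vertices c"
proof -
  assume "e \<in> hex_edges c"
  then obtain k where "e = E k c" unfolding hex_edges_eq by blast
  moreover have "V k c \<noteq> V (Suc k) c" unfolding V_eq_any by (simp add: mod_Suc)
  moreover have "V k c \<in> hex_vertices c" "V (Suc k) c \<in> hex_vertices c" by (rule V_in_hex)+
  ultimately show ?thesis unfolding E_def by blast
qed

lemma hex_edge_cells: "e \<in> hex_edges d \<Longrightarrow> x \<in> e \<Longrightarrow> d \<in> x"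
proof -
  assume "e \<in> hex_edges d" "x \<in> e"
  then obtain u v where "e = {u,v}" "u \<in> hex_vertices d" "v \<in> hex_vertices d"
    unfolding hex_edges_def by blast
  then have "x \<in> hex_vertices d" using \<open>x \<in> e\<close> by blast
  then show "d \<in> x" unfolding hex_vertices_def by simp
qed

lemma E_in_hex: "E k c \<in> hex_edges c"
  unfolding hex_edges_eq by (rule image_eqI[of _ _ "k mod 6"]) (simp_all add: E_mod)

lemma share_edge: "c \<noteq> d \<Longrightarrow> card (hex_edges c \<inter> hex_edges d) \<le> 1"
proof -
  assume cd: "c \<noteq> d"
  have key: "e \<in> hex_edges c \<Longrightarrow> e \<in> hex_edges d \<Longrightarrow> \<exists>k. e = E k c \<and> nb (Suc k) c = d" for e
  proof -
    assume "e \<in> hex_edges c" "e \<in> hex_edges d"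
    then obtain k where k: "e = E k c" unfolding hex_edges_eq[of c] by blast
    have "d \<in> V k c" "d \<in> V (Suc k) c" using hex_edge_cells[OF \<open>e \<in> hex_edges d\<close>] k unfolding E_def by auto
    then have "d \<in> {c, nb (Suc k) c}" using V_int_adj[of k c] by blast
    then show ?thesis using k cd by auto
  qed
  have "\<forall>x\<in>hex_edges c \<inter> hex_edges d. \<forall>y\<in>hex_edges c \<inter> hex_edges d. x = y"
  proof (intro ballI)
    fix x y assume "x \<in> hex_edges c \<inter> hex_edges d" "y \<in> hex_edges c \<inter> hex_edges d"
    then obtain k l where "x = E k c" "nb (Suc k) c = d" "y = E l c" "nb (Suc l) c = d"
      using key by blast
    then have "nb (Suc k) c = nb (Suc l) c" by simp
    then have "Suc k mod 6 = Suc l mod 6" by (simp only: nb_eq_any)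
    then have "k mod 6 = l mod 6" by (rule Suc_mod6)
    then show "x = y" unfolding \<open>x = E k c\<close> \<open>y = E l c\<close> E_eq_any .
  qed
  then show ?thesis using finite_hex[of c] by (simp add: card_le_Suc0_iff_eq)
qed

lemma alt_step: "alternating N c \<Longrightarrow> (E k c \<in> N \<longleftrightarrow> E (Suc k) c \<notin> N)"
proof -
  assume alt: "alternating N c"
  let ?w = "V (Suc k) c"
  have w: "?w \<in> hex_vertices c" by (rule V_in_hex)
  have "\<exists>!e. e \<in> N \<inter> hex_edges c \<and> ?w \<in> e" using alt w unfolding alternating_def by (rule bspec)
  then obtain e where e: "e \<in> N \<inter> hex_edges c" "?w \<in> e"
    and uq: "\<And>e'. e' \<in> N \<inter> hex_edges c \<Longrightarrow> ?w \<in> e' \<Longrightarrow> e' = e"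
    by (rule ex1E) blast
  have in1: "E k c \<in> hex_edges c" "E (Suc k) c \<in> hex_edges c" by (rule E_in_hex)+
  have w1: "?w \<in> E k c" "?w \<in> E (Suc k) c" unfolding E_def by auto
  have ne: "E k c \<noteq> E (Suc k) c" unfolding E_eq_any by (simp add: mod_Suc)
  obtain j where j: "e = E j c" using e(1) unfolding hex_edges_eq by blast
  have "?w = V j c \<or> ?w = V (Suc j) c" using e(2) unfolding j E_def by simp
  then have "Suc k mod 6 = j mod 6 \<or> Suc k mod 6 = Suc j mod 6"
    by (simp only: V_eq_any)
  then have eo: "e = E (Suc k) c \<or> e = E k c"
  proof
    assume "Suc k mod 6 = j mod 6"
    then have "E (Suc k) c = E j c" by (simp only: E_eq_any)
    then show ?thesis using j by simp
  next
    assume "Suc k mod 6 = Suc j mod 6"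
    then have "k mod 6 = j mod 6" by (rule Suc_mod6)
    then have "E k c = E j c" by (simp only: E_eq_any)
    then show ?thesis using j by simp
  qed
  show ?thesis
  proof
    assume "E k c \<in> N"
    show "E (Suc k) c \<notin> N"
    proof
      assume "E (Suc k) c \<in> N"
      then have "E (Suc k) c = e" "E k c = e" using uq in1 w1 \<open>E k c \<in> N\<close> by blast+
      then show False using ne by simp
    qed
  next
    assume "E (Suc k) c \<notin> N"
    then have "e \<noteq> E (Suc k) c" using e(1) by blast
    then show "E k c \<in> N" using eo e(1) by blast
  qed
qed
lemma alt_bits: "alternating N c \<Longrightarrow> k < 6 \<Longrightarrow> (E k c \<in> N \<longleftrightarrow> (E 0 c \<in> N \<longleftrightarrow> even k))"
proof -
  assume alt: "alternating N c" and k: "k < 6"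
  have s: "E i c \<in> N \<longleftrightarrow> E (Suc i) c \<notin> N" for i using alt_step[OF alt] .
  have f1: "E 1 c \<in> N \<longleftrightarrow> E 0 c \<notin> N" using s[of 0] by (simp add: numeral_eq_Suc)
  have f2: "E 2 c \<in> N \<longleftrightarrow> E 1 c \<notin> N" using s[of 1] by (simp add: numeral_eq_Suc)
  have f3: "E 3 c \<in> N \<longleftrightarrow> E 2 c \<notin> N" using s[of 2] by (simp add: numeral_eq_Suc)
  have f4: "E 4 c \<in> N \<longleftrightarrow> E 3 c \<notin> N" using s[of 3] by (simp add: numeral_eq_Suc)
  have f5: "E 5 c \<in> N \<longleftrightarrow> E 4 c \<notin> N" using s[of 4] by (simp add: numeral_eq_Suc)
  from six_cases[OF k] show ?thesis
    by (elim disjE) (simp_all only: f1 f2 f3 f4 f5 even_zero odd_one simp_thms, simp_all)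
qed

lemma alt_two: "alternating N c \<Longrightarrow> alternating N' c \<Longrightarrow>
   N \<inter> hex_edges c = N' \<inter> hex_edges c \<or> N \<inter> hex_edges c = hex_edges c - N'"
proof -
  assume a: "alternating N c" "alternating N' c"
  show ?thesis
  proof (cases "E 0 c \<in> N \<longleftrightarrow> E 0 c \<in> N'")
    case True
    then have "\<forall>k<6. E k c \<in> N \<longleftrightarrow> E k c \<in> N'" using alt_bits[OF a(1)] alt_bits[OF a(2)] by blast
    then have "N \<inter> hex_edges c = N' \<inter> hex_edges c" unfolding hex_edges_eq by auto
    then show ?thesis ..
  next
    case False
    then have "\<forall>k<6. E k c \<in> N \<longleftrightarrow> E k c \<notin> N'" using alt_bits[OF a(1)] alt_bits[OF a(2)] by blast
    then have "N \<inter> hex_edges c = hex_edges c - N'" unfolding hex_edges_eq by auto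
    then show ?thesis ..
  qed
qed


definition sd :: "'a set \<Rightarrow> 'a set \<Rightarrow> 'a set" where
  "sd X Y = (X - Y) \<union> (Y - X)"

lemma sd_sym: "sd X Y = sd Y X" unfolding sd_def by blast
lemma sd_sd: "sd X (sd X Y) = Y" unfolding sd_def by blast
lemma sd_trans: "sd X Z = sd (sd X Y) (sd Y Z)" unfolding sd_def by blast
lemma sd_empty: "sd X Y = {} \<Longrightarrow> X = Y" unfolding sd_def by blast
lemma sd_self: "sd X X = {}" unfolding sd_def by blast
lemma sd_union: "U \<inter> H = {} \<Longrightarrow> sd (sd X U) H = sd X (U \<union> H)" unfolding sd_def by blast

lemma hex_inj: "hex_edges c = hex_edges d \<Longrightarrow> c = d"
proof (rule ccontr)
  assume "hex_edges c = hex_edges d" "c \<noteq> d"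
  then have "card (hex_edges c \<inter> hex_edges d) \<le> 1" using share_edge by blast
  then show False using \<open>hex_edges c = hex_edges d\<close> card_hex[of c] by simp
qed

lemma two_edges: "v \<in> hex_vertices c \<Longrightarrow> \<exists>e1 e2. e1 \<noteq> e2 \<and> e1 \<in> hex_edges c \<and> e2 \<in> hex_edges c \<and> v \<in> e1 \<and> v \<in> e2"
proof -
  assume "v \<in> hex_vertices c"
  then obtain k where k: "v = V k c" unfolding hex_vertices_eq by blast
  have "V (Suc (k + 5)) c = V k c" unfolding V_eq_any by simp
  then have "v \<in> E (k+5) c" "v \<in> E k c" unfolding k E_def by auto
  moreover have "k mod 6 \<noteq> (k+5) mod 6" by presburger
  then have "E k c \<noteq> E (k+5) c" by (metis E_eq_any)
  moreover have "E k c \<in> hex_edges c" "E (k+5) c \<in> hex_edges c" by (rule E_in_hex)+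
  ultimately show ?thesis by blast
qed

lemma HE_sub: "e \<in> HE S \<Longrightarrow> x \<in> e \<Longrightarrow> x \<in> HV S"
proof -
  assume "e \<in> HE S" "x \<in> e"
  then obtain c where c: "c \<in> S" "e \<in> hex_edges c" unfolding HE_def by blast
  obtain u v where uv: "e = {u,v}" "u \<in> hex_vertices c" "v \<in> hex_vertices c" using hex_edge_struct[OF c(2)] by blast
  have "x \<in> hex_vertices c" using uv \<open>x \<in> e\<close> by blast
  then show ?thesis using c(1) unfolding HV_def by blast
qed

lemma HE_ne: "e \<in> HE S \<Longrightarrow> \<exists>x. x \<in> e"
proof -
  assume "e \<in> HE S"
  then obtain c where c: "c \<in> S" "e \<in> hex_edges c" unfolding HE_def by blast
  then show ?thesis using hex_edge_struct[OF c(2)] by blast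
qed

lemma ex1_same: assumes "\<exists>!x. P x" "P a" "P b" shows "a = b"
  using assms(1)
proof (rule ex1E)
  fix x assume "P x" "\<forall>y. P y \<longrightarrow> y = x"
  then show "a = b" using assms(2,3) by blast
qed

lemma pm_uniq: "perfect_matching S M \<Longrightarrow> e \<in> M \<Longrightarrow> e' \<in> M \<Longrightarrow> x \<in> e \<Longrightarrow> x \<in> e' \<Longrightarrow> e = e'"
proof -
  assume pm: "perfect_matching S M" and a: "e \<in> M" "e' \<in> M" "x \<in> e" "x \<in> e'"
  have "M \<subseteq> HE S" using pm unfolding perfect_matching_def by blast
  then have "x \<in> HV S" using HE_sub a by blast
  have "\<forall>v\<in>HV S. \<exists>!e. e \<in> M \<and> v \<in> e" using pm unfolding perfect_matching_def by (rule conjunct2)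
  then have "\<exists>!e. e \<in> M \<and> x \<in> e" using \<open>x \<in> HV S\<close> by (rule bspec)
  then show ?thesis by (rule ex1_same) (simp_all add: a)
qed

lemma pm_ex: "perfect_matching S M \<Longrightarrow> x \<in> HV S \<Longrightarrow> \<exists>e. e \<in> M \<and> x \<in> e"
proof -
  assume pm: "perfect_matching S M" and x: "x \<in> HV S"
  have "\<forall>v\<in>HV S. \<exists>!e. e \<in> M \<and> v \<in> e" using pm unfolding perfect_matching_def by (rule conjunct2)
  then have "\<exists>!e. e \<in> M \<and> x \<in> e" using x by (rule bspec)
  then show ?thesis by (rule ex1_implies_ex)
qed

lemma pm_alt:
  assumes pm: "perfect_matching S M" "perfect_matching S M'"
    and d: "sd M M' = hex_edges c" and cS: "c \<in> S"
  shows "alternating M c"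
  unfolding alternating_def
proof
  fix v assume v: "v \<in> hex_vertices c"
  then have vH: "v \<in> HV S" using cS unfolding HV_def by blast
  obtain e where e: "e \<in> M" "v \<in> e" using pm_ex[OF pm(1) vH] by blast
  have eh: "e \<in> hex_edges c"
  proof (rule ccontr)
    assume ne: "e \<notin> hex_edges c"
    obtain e1 e2 where e12: "e1 \<noteq> e2" "e1 \<in> hex_edges c" "e2 \<in> hex_edges c" "v \<in> e1" "v \<in> e2"
      using two_edges[OF v] by blast
    have "e1 \<notin> M" using pm_uniq[OF pm(1) e(1) _ e(2) e12(4)] ne e12(2) by blast
    then have "e1 \<in> M'" using e12(2) d unfolding sd_def by blast
    have "e2 \<notin> M" using pm_uniq[OF pm(1) e(1) _ e(2) e12(5)] ne e12(3) by blast
    then have "e2 \<in> M'" using e12(3) d unfolding sd_def by blast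
    then show False using pm_uniq[OF pm(2) \<open>e1 \<in> M'\<close> \<open>e2 \<in> M'\<close> e12(4) e12(5)] e12(1) by blast
  qed
  show "\<exists>!e. e \<in> M \<inter> hex_edges c \<and> v \<in> e"
  proof
    show "e \<in> M \<inter> hex_edges c \<and> v \<in> e" using e eh by blast
  next
    fix e' assume "e' \<in> M \<inter> hex_edges c \<and> v \<in> e'"
    then show "e' = e" using pm_uniq[OF pm(1)] e by blast
  qed
qed

lemma char3:
  assumes "x \<noteq> y"
  shows "3 \<le> card (hex_edges z \<inter> sd (hex_edges x) (hex_edges y)) \<longleftrightarrow> z = x \<or> z = y"
proof -
  have fin: "finite (hex_edges w)" for w by (rule finite_hex)
  have big: "3 \<le> card (hex_edges x \<inter> sd (hex_edges x) (hex_edges y))" if "x \<noteq> y" for x y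
  proof -
    have "hex_edges x \<inter> sd (hex_edges x) (hex_edges y) = hex_edges x - hex_edges y" unfolding sd_def by blast
    moreover have "card (hex_edges x - hex_edges y) = card (hex_edges x) - card (hex_edges x \<inter> hex_edges y)"
      by (rule card_Diff_subset_Int) (simp add: fin)
    moreover have "card (hex_edges x \<inter> hex_edges y) \<le> 1" using share_edge[OF that] .
    ultimately show ?thesis using card_hex[of x] by simp
  qed
  show ?thesis
  proof
    assume "3 \<le> card (hex_edges z \<inter> sd (hex_edges x) (hex_edges y))"
    show "z = x \<or> z = y"
    proof (rule ccontr)
      assume "\<not> (z = x \<or> z = y)"
      then have zx: "z \<noteq> x" and zy: "z \<noteq> y" by auto
      have "hex_edges z \<inter> sd (hex_edges x) (hex_edges y) \<subseteq> (hex_edges z \<inter> hex_edges x) \<union> (hex_edges z \<inter> hex_edges y)"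
        unfolding sd_def by blast
      then have "card (hex_edges z \<inter> sd (hex_edges x) (hex_edges y)) \<le> card ((hex_edges z \<inter> hex_edges x) \<union> (hex_edges z \<inter> hex_edges y))"
        by (rule card_mono[rotated]) (simp add: fin)
      also have "\<dots> \<le> card (hex_edges z \<inter> hex_edges x) + card (hex_edges z \<inter> hex_edges y)" by (rule card_Un_le)
      also have "\<dots> \<le> 2" using share_edge[OF zx] share_edge[OF zy] by simp
      finally show False using \<open>3 \<le> _\<close> by simp
    qed
  next
    assume "z = x \<or> z = y"
    then show "3 \<le> card (hex_edges z \<inter> sd (hex_edges x) (hex_edges y))"
    proof
      assume "z = x" then show ?thesis using big[OF assms] by simp
    next
      assume "z = y" then show ?thesis using big[of y x] assms sd_sym[of "hex_edges x"] by simp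
    qed
  qed
qed

lemma square:
  assumes "sd M1 M2 = hex_edges a" "sd M2 M3 = hex_edges b" "sd M3 M4 = hex_edges a'" "sd M4 M1 = hex_edges b'"
    and "M1 \<noteq> M3" "M2 \<noteq> M4"
  shows "a' = a \<and> b' = b \<and> a \<noteq> b"
proof -
  have X1: "sd M1 M3 = sd (hex_edges a) (hex_edges b)" using sd_trans[of M1 M3 M2] assms by simp
  have "sd M1 M3 = sd (sd M1 M4) (sd M4 M3)" by (rule sd_trans)
  then have X2: "sd M1 M3 = sd (hex_edges b') (hex_edges a')" using assms sd_sym by metis
  have ab: "a \<noteq> b"
  proof
    assume "a = b" then have "sd M1 M3 = {}" using X1 sd_self by metis
    then show False using assms(5) sd_empty by blast
  qed
  have ab': "b' \<noteq> a'"
  proof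
    assume "b' = a'" then have "sd M1 M3 = {}" using X2 sd_self by metis
    then show False using assms(5) sd_empty by blast
  qed
  have "z = a \<or> z = b \<longleftrightarrow> z = b' \<or> z = a'" for z
    using char3[OF ab, of z] char3[OF ab', of z] X1 X2 by simp
  then have "a = b' \<or> a = a'" "b = b' \<or> b = a'" by blast+
  moreover have "a \<noteq> b'"
  proof
    assume "a = b'"
    then have "sd M1 M2 = sd M1 M4" using assms(1) assms(4) sd_sym by metis
    then have "M2 = M4" using sd_sd by metis
    then show False using assms(6) by simp
  qed
  ultimately show ?thesis using ab by blast
qed

lemma hex_disj_edges: "hex_vertices a \<inter> hex_vertices b = {} \<Longrightarrow> hex_edges a \<inter> hex_edges b = {}"
proof (rule ccontr)
  assume d: "hex_vertices a \<inter> hex_vertices b = {}" "hex_edges a \<inter> hex_edges b \<noteq> {}"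
  then obtain e where "e \<in> hex_edges a" "e \<in> hex_edges b" by blast
  obtain u v where uv: "e = {u,v}" "u \<in> hex_vertices a"
    using hex_edge_struct[OF \<open>e \<in> hex_edges a\<close>] by blast
  have "b \<in> u" using hex_edge_cells[OF \<open>e \<in> hex_edges b\<close>] uv(1) by blast
  moreover have "lattice_vertex u" using uv(2) unfolding hex_vertices_def by blast
  ultimately have "u \<in> hex_vertices b" unfolding hex_vertices_def by blast
  then show False using d uv(2) by blast
qed

lemma disj:
  assumes pm: "perfect_matching S M1" "perfect_matching S M2"
    and d: "sd M1 M2 = hex_edges a"
    and alt: "alternating M1 a" "alternating M1 b" "alternating M2 a" "alternating M2 b"
    and ab: "a \<noteq> b"
  shows "hex_vertices a \<inter> hex_vertices b = {}"
proof (rule ccontr)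
  assume "hex_vertices a \<inter> hex_vertices b \<noteq> {}"
  then obtain T where Ta: "T \<in> hex_vertices a" and Tb: "T \<in> hex_vertices b" by blast
  have get: "\<exists>e. e \<in> M \<inter> hex_edges c \<and> T \<in> e" if "alternating M c" "T \<in> hex_vertices c" for M c
  proof -
    have "\<exists>!e. e \<in> M \<inter> hex_edges c \<and> T \<in> e" using that unfolding alternating_def by (rule bspec)
    then show ?thesis by (rule ex1_implies_ex)
  qed
  obtain e1 where e1: "e1 \<in> M1 \<inter> hex_edges a" "T \<in> e1" using get[OF alt(1) Ta] by blast
  obtain f1 where f1: "f1 \<in> M1 \<inter> hex_edges b" "T \<in> f1" using get[OF alt(2) Tb] by blast
  obtain e2 where e2: "e2 \<in> M2 \<inter> hex_edges a" "T \<in> e2" using get[OF alt(3) Ta] by blast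
  obtain f2 where f2: "f2 \<in> M2 \<inter> hex_edges b" "T \<in> f2" using get[OF alt(4) Tb] by blast
  have "e1 = f1" using pm_uniq[OF pm(1)] e1 f1 by blast
  have "e2 = f2" using pm_uniq[OF pm(2)] e2 f2 by blast
  have "e1 \<notin> M2" using e1 d unfolding sd_def by blast
  then have "e1 \<noteq> e2" using e2 by blast
  have "{e1, e2} \<subseteq> hex_edges a \<inter> hex_edges b" using e1 e2 f1 f2 \<open>e1 = f1\<close> \<open>e2 = f2\<close> by blast
  then have "card {e1, e2} \<le> card (hex_edges a \<inter> hex_edges b)"
    by (rule card_mono[rotated]) (simp add: finite_hex)
  then show False using share_edge[OF ab] \<open>e1 \<noteq> e2\<close> by simp
qed



lemma cadj: "i \<notin> A \<Longrightarrow> cube_adj A (insert i A)"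
proof -
  assume "i \<notin> A"
  then have "(A - insert i A) \<union> (insert i A - A) = {i}" by blast
  then show ?thesis unfolding cube_adj_def by simp
qed

lemma cadj_sym: "cube_adj A B \<Longrightarrow> cube_adj B A"
  unfolding cube_adj_def by (simp add: Un_commute)

theorem lemma6:
  fixes S :: "cell set" and W :: "hedge set set" and n :: nat
  assumes "hexagonal_system S"
    and "kekulean S"
    and "W \<subseteq> {M. perfect_matching S M}"
    and "induced_iso_cube S W n"
  shows "\<exists>K F. clar_cover S K F \<and> card K = n \<and> clar_set S K F = W"
proof -
  define P where "P = Pow {..<n}"
  obtain \<phi> where bij: "bij_betw \<phi> P W"
    and adj: "\<forall>A\<in>P. \<forall>B\<in>P. cube_adj A B \<longleftrightarrow> res_adj S (\<phi> A) (\<phi> B)"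
    using assms(4) unfolding induced_iso_cube_def P_def by blast
  have inj: "inj_on \<phi> P" using bij by (rule bij_betw_imp_inj_on)
  have img: "\<phi> ` P = W" using bij by (rule bij_betw_imp_surj_on)
  have pmP: "perfect_matching S (\<phi> A)" if "A \<in> P" for A
    using that img assms(3) by blast
  have edge: "\<exists>c\<in>S. sd (\<phi> A) (\<phi> B) = hex_edges c" if "A \<in> P" "B \<in> P" "cube_adj A B" for A B
  proof -
    have "res_adj S (\<phi> A) (\<phi> B)" using adj that by blast
    then show ?thesis unfolding res_adj_def sd_def by blast
  qed
  have inP: "A \<in> P \<longleftrightarrow> A \<subseteq> {..<n}" for A unfolding P_def by simp
  have neq: "\<phi> A \<noteq> \<phi> B" if "A \<in> P" "B \<in> P" "A \<noteq> B" for A B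
    using inj that unfolding inj_on_def by blast
  define M0 where "M0 = \<phi> {}"
  define h where "h i = (SOME c. c \<in> S \<and> sd M0 (\<phi> {i}) = hex_edges c)" for i
  have h: "h i \<in> S \<and> sd M0 (\<phi> {i}) = hex_edges (h i)" if "i < n" for i
  proof -
    have "\<exists>c\<in>S. sd (\<phi> {}) (\<phi> (insert i {})) = hex_edges c"
      by (rule edge) (use that in \<open>simp_all add: inP cadj\<close>)
    then have "\<exists>c. c \<in> S \<and> sd M0 (\<phi> {i}) = hex_edges c" unfolding M0_def by blast
    then show ?thesis unfolding h_def by (rule someI_ex)
  qed
  have hS: "h i \<in> S" if "i < n" for i using h[OF that] by blast
  have lab: "sd (\<phi> A) (\<phi> (insert i A)) = hex_edges (h i)" if "i < n" "A \<subseteq> {..<n}" "i \<notin> A" for i A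
  proof -
    have "finite A \<Longrightarrow> A \<subseteq> {..<n} - {i} \<Longrightarrow> sd (\<phi> A) (\<phi> (insert i A)) = hex_edges (h i)" for A
    proof (induction A rule: finite_induct)
      case empty
      then show ?case using h[OF \<open>i < n\<close>] unfolding M0_def by simp
    next
      case (insert j A)
      have j: "j < n" "j \<noteq> i" "A \<subseteq> {..<n} - {i}" using insert.prems by auto
      have IH: "sd (\<phi> A) (\<phi> (insert i A)) = hex_edges (h i)" using insert.IH j(3) .
      define A1 where "A1 = A"
      define A2 where "A2 = insert i A"
      define A3 where "A3 = insert j (insert i A)"
      define A4 where "A4 = insert j A"
      have P: "A1 \<in> P" "A2 \<in> P" "A3 \<in> P" "A4 \<in> P"
        unfolding A1_def A2_def A3_def A4_def inP using j \<open>i < n\<close> by auto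
      have "cube_adj A2 A3" unfolding A2_def A3_def by (rule cadj) (use j insert.hyps in auto)
      then obtain b where b: "sd (\<phi> A2) (\<phi> A3) = hex_edges b" using edge P by blast
      have "A3 = insert i A4" unfolding A3_def A4_def by auto
      moreover have "i \<notin> A4" unfolding A4_def using j by auto
      ultimately have "cube_adj A3 A4" using cadj[of i A4] cadj_sym by simp
      then obtain a' where a': "sd (\<phi> A3) (\<phi> A4) = hex_edges a'" using edge P by blast
      have "cube_adj A4 A1" unfolding A4_def A1_def using cadj[of j A] cadj_sym insert.hyps(2) by blast
      then obtain b' where b': "sd (\<phi> A4) (\<phi> A1) = hex_edges b'" using edge P by blast
      have "A1 \<noteq> A3" unfolding A1_def A3_def using j(3) by auto
      then have d13: "\<phi> A1 \<noteq> \<phi> A3" using neq P by blast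
      have "A2 \<noteq> A4" unfolding A2_def A4_def using j insert.hyps(2) by auto
      then have d24: "\<phi> A2 \<noteq> \<phi> A4" using neq P by blast
      have "a' = h i" using square[OF IH[folded A1_def A2_def] b a' b' d13 d24] by blast
      moreover have "insert i (insert j A) = A3" unfolding A3_def by auto
      ultimately show ?case using a' sd_sym unfolding A4_def by metis
    qed
    then show ?thesis using that finite_subset[of A "{..<n}"] by blast
  qed
  have alt: "alternating (\<phi> A) (h i)" if "i < n" "A \<subseteq> {..<n}" for i A
  proof (cases "i \<in> A")
    case False
    have "insert i A \<in> P" using that unfolding inP by auto
    then show ?thesis using pm_alt[OF pmP pmP lab[OF that False] hS[OF that(1)]] that inP by blast
  next
    case True
    define A' where "A' = A - {i}"
    have "sd (\<phi> A') (\<phi> (insert i A')) = hex_edges (h i)" using lab[of i A'] that unfolding A'_def by auto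
    moreover have "insert i A' = A" unfolding A'_def using True by auto
    ultimately have "sd (\<phi> A) (\<phi> A') = hex_edges (h i)" using sd_sym by metis
    moreover have "A' \<in> P" "A \<in> P" using that unfolding inP A'_def by auto
    ultimately show ?thesis using pm_alt[OF pmP pmP _ hS[OF that(1)]] by blast
  qed
  have dd: "h i \<noteq> h j \<and> hex_vertices (h i) \<inter> hex_vertices (h j) = {}" if "i < n" "j < n" "i \<noteq> j" for i j
  proof -
    have s1: "sd (\<phi> {}) (\<phi> {i}) = hex_edges (h i)" using lab[of i "{}"] that by simp
    have s2: "sd (\<phi> {i}) (\<phi> {j,i}) = hex_edges (h j)" using lab[of j "{i}"] that by simp
    have "sd (\<phi> {j}) (\<phi> {i,j}) = hex_edges (h i)" using lab[of i "{j}"] that by simp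
    then have s3: "sd (\<phi> {j,i}) (\<phi> {j}) = hex_edges (h i)" using sd_sym insert_commute by metis
    have "sd (\<phi> {}) (\<phi> {j}) = hex_edges (h j)" using lab[of j "{}"] that by simp
    then have s4: "sd (\<phi> {j}) (\<phi> {}) = hex_edges (h j)" using sd_sym by metis
    have P: "{} \<in> P" "{i} \<in> P" "{j,i} \<in> P" "{j} \<in> P" using that unfolding inP by auto
    have "\<phi> {} \<noteq> \<phi> {j,i}" "\<phi> {i} \<noteq> \<phi> {j}" using neq P that by auto
    then have ne: "h i \<noteq> h j" using square[OF s1 s2 s3 s4] by blast
    have "hex_vertices (h i) \<inter> hex_vertices (h j) = {}"
      by (rule disj[OF pmP[OF P(1)] pmP[OF P(2)] s1 alt alt alt alt ne]) (use that in auto)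
    with ne show ?thesis by blast
  qed
  have edisj: "hex_edges (h i) \<inter> hex_edges (h j) = {}" if "i < n" "j < n" "i \<noteq> j" for i j
    using dd[OF that] hex_disj_edges by blast
  define U where "U A = (\<Union>i\<in>A. hex_edges (h i))" for A
  have form: "\<phi> A = sd M0 (U A)" if "A \<subseteq> {..<n}" for A
  proof -
    have "finite A \<Longrightarrow> A \<subseteq> {..<n} \<Longrightarrow> \<phi> A = sd M0 (U A)" for A
    proof (induction A rule: finite_induct)
      case empty
      then show ?case unfolding U_def M0_def sd_def by simp
    next
      case (insert j A)
      have j: "j < n" "A \<subseteq> {..<n}" using insert.prems by auto
      have "sd (\<phi> A) (\<phi> (insert j A)) = hex_edges (h j)" using lab j insert.hyps(2) by blast
      then have "\<phi> (insert j A) = sd (\<phi> A) (hex_edges (h j))" using sd_sd by metis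
      also have "\<dots> = sd (sd M0 (U A)) (hex_edges (h j))" using insert.IH j(2) by simp
      also have "\<dots> = sd M0 (U A \<union> hex_edges (h j))"
      proof (rule sd_union)
        show "U A \<inter> hex_edges (h j) = {}" unfolding U_def
          using edisj j insert.hyps(2) by blast
      qed
      also have "U A \<union> hex_edges (h j) = U (insert j A)" unfolding U_def by auto
      finally show ?case .
    qed
    then show ?thesis using that finite_subset[of A "{..<n}"] by blast
  qed
  have UH: "U A \<inter> hex_edges (h i) = (if i \<in> A then hex_edges (h i) else {})" if "i < n" "A \<subseteq> {..<n}" for i A
    unfolding U_def using edisj[of i] that by auto
  have inter: "\<phi> A \<inter> hex_edges (h i) = (if i \<in> A then hex_edges (h i) - M0 else M0 \<inter> hex_edges (h i))"
    if "i < n" "A \<subseteq> {..<n}" for i A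
    using form[OF that(2)] UH[OF that] unfolding sd_def by (auto split: if_splits)
  define K where "K = h ` {..<n}"
  define F where "F = M0 - U {..<n}"
  have pm0: "perfect_matching S M0" unfolding M0_def using pmP inP by simp
  have M0HE: "M0 \<subseteq> HE S" using pm0 unfolding perfect_matching_def by blast
  have alt0: "alternating M0 (h i)" if "i < n" for i unfolding M0_def using alt that by simp
  have altget: "\<exists>e. e \<in> M \<inter> hex_edges c \<and> x \<in> e" if "alternating M c" "x \<in> hex_vertices c" for M c x
  proof -
    have "\<exists>!e. e \<in> M \<inter> hex_edges c \<and> x \<in> e" using that unfolding alternating_def by (rule bspec)
    then show ?thesis by (rule ex1_implies_ex)
  qed
  have injh: "inj_on h {..<n}" unfolding inj_on_def using dd by blast
  have cc: "clar_cover S K F"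
    unfolding clar_cover_def
  proof (intro conjI)
    show "K \<subseteq> S" unfolding K_def using hS by blast
    show "F \<subseteq> HE S" unfolding F_def using M0HE by blast
    show "\<forall>c\<in>K. \<forall>d\<in>K. c \<noteq> d \<longrightarrow> hex_vertices c \<inter> hex_vertices d = {}"
      unfolding K_def using dd by blast
    show "\<forall>e\<in>F. \<forall>e'\<in>F. e \<noteq> e' \<longrightarrow> e \<inter> e' = {}"
    proof (intro ballI impI)
      fix e e' assume "e \<in> F" "e' \<in> F" "e \<noteq> e'"
      then show "e \<inter> e' = {}" using pm_uniq[OF pm0, of e e'] unfolding F_def by blast
    qed
    show "\<forall>e\<in>F. \<forall>c\<in>K. e \<inter> hex_vertices c = {}"
    proof (intro ballI)
      fix e c assume e: "e \<in> F" and "c \<in> K"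
      then obtain i where i: "i < n" "c = h i" unfolding K_def by blast
      show "e \<inter> hex_vertices c = {}"
      proof (rule ccontr)
        assume "e \<inter> hex_vertices c \<noteq> {}"
        then obtain x where x: "x \<in> e" "x \<in> hex_vertices c" by blast
        obtain e' where e': "e' \<in> M0 \<inter> hex_edges c" "x \<in> e'" using altget[OF alt0[OF i(1)] x(2)[unfolded i(2)]] i(2) by blast
        have "e \<in> M0" using e unfolding F_def by blast
        then have "e = e'" using pm_uniq[OF pm0 _ _ x(1) e'(2)] e' by blast
        then show False using e e' i unfolding F_def U_def by blast
      qed
    qed
    show "HV S = (\<Union>c\<in>K. hex_vertices c) \<union> \<Union>F"
    proof
      show "(\<Union>c\<in>K. hex_vertices c) \<union> \<Union>F \<subseteq> HV S"
      proof
        fix x assume "x \<in> (\<Union>c\<in>K. hex_vertices c) \<union> \<Union>F"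
        then show "x \<in> HV S"
        proof
          assume "x \<in> (\<Union>c\<in>K. hex_vertices c)"
          then show ?thesis unfolding HV_def K_def using hS by blast
        next
          assume "x \<in> \<Union>F"
          then obtain e where "e \<in> F" "x \<in> e" by blast
          then show ?thesis using HE_sub M0HE unfolding F_def by blast
        qed
      qed
    next
      show "HV S \<subseteq> (\<Union>c\<in>K. hex_vertices c) \<union> \<Union>F"
      proof
        fix x assume "x \<in> HV S"
        then obtain e where e: "e \<in> M0" "x \<in> e" using pm_ex[OF pm0] by blast
        show "x \<in> (\<Union>c\<in>K. hex_vertices c) \<union> \<Union>F"
        proof (cases "e \<in> U {..<n}")
          case True
          then obtain i where i: "i < n" "e \<in> hex_edges (h i)" unfolding U_def by blast
          obtain u v where "e = {u,v}" "u \<in> hex_vertices (h i)" "v \<in> hex_vertices (h i)"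
            using hex_edge_struct[OF i(2)] by blast
          then have "x \<in> hex_vertices (h i)" using e(2) by blast
          then show ?thesis unfolding K_def using i(1) by blast
        next
          case False
          then show ?thesis using e unfolding F_def by blast
        qed
      qed
    qed
  qed
  have cardK: "card K = n" unfolding K_def using card_image[OF injh] by simp
  have uniq: "M = M'" if M: "perfect_matching S M" "\<forall>c\<in>K. alternating M c" "F \<subseteq> M"
    and M': "perfect_matching S M'" "\<forall>c\<in>K. alternating M' c" "F \<subseteq> M'"
    and agree: "\<forall>c\<in>K. M \<inter> hex_edges c = M' \<inter> hex_edges c" for M M'
  proof -
    have cov: "HV S = (\<Union>c\<in>K. hex_vertices c) \<union> \<Union>F" using cc unfolding clar_cover_def by blast
    have sub: "M1 \<subseteq> M2" if a: "perfect_matching S M1" "\<forall>c\<in>K. alternating M1 c" "F \<subseteq> M1"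
      "F \<subseteq> M2" "\<forall>c\<in>K. M1 \<inter> hex_edges c = M2 \<inter> hex_edges c" for M1 M2
    proof
      fix e assume e: "e \<in> M1"
      have "e \<in> HE S" using a(1) e unfolding perfect_matching_def by blast
      then obtain x where x: "x \<in> e" using HE_ne by blast
      have "x \<in> HV S" using HE_sub[OF \<open>e \<in> HE S\<close> x] .
      then have "x \<in> (\<Union>c\<in>K. hex_vertices c) \<or> x \<in> \<Union>F" using cov by blast
      then show "e \<in> M2"
      proof
        assume "x \<in> (\<Union>c\<in>K. hex_vertices c)"
        then obtain c where c: "c \<in> K" "x \<in> hex_vertices c" by blast
        obtain e' where e': "e' \<in> M1 \<inter> hex_edges c" "x \<in> e'" using altget[of M1 c x] a(2) c by blast
        have "e = e'" using pm_uniq[OF a(1) e _ x e'(2)] e' by blast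
        then have "e \<in> M1 \<inter> hex_edges c" using e' by blast
        then show ?thesis using a(5) c(1) by blast
      next
        assume "x \<in> \<Union>F"
        then obtain f where f: "f \<in> F" "x \<in> f" by blast
        then have "e = f" using pm_uniq[OF a(1) e _ x f(2)] a(3) by blast
        then show ?thesis using f a(4) by blast
      qed
    qed
    show ?thesis
      using sub[OF M(1) M(2) M(3) M'(3) agree] sub[OF M'(1) M'(2) M'(3) M(3)] agree by blast
  qed
  have cs: "clar_set S K F = W"
  proof
    show "W \<subseteq> clar_set S K F"
    proof
      fix M assume "M \<in> W"
      then obtain A where A: "A \<in> P" "M = \<phi> A" using img by blast
      have As: "A \<subseteq> {..<n}" using A(1) inP by blast
      have "perfect_matching S M" using pmP A by simp
      moreover have "\<forall>c\<in>K. alternating M c" unfolding K_def A(2) using alt As by blast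
      moreover have "F \<subseteq> M"
      proof
        fix e assume "e \<in> F"
        then have "e \<in> M0" "e \<notin> U A" unfolding F_def U_def using As by auto
        then show "e \<in> M" unfolding A(2) form[OF As] sd_def by blast
      qed
      ultimately show "M \<in> clar_set S K F" unfolding clar_set_def by blast
    qed
  next
    show "clar_set S K F \<subseteq> W"
    proof
      fix M assume "M \<in> clar_set S K F"
      then have M: "perfect_matching S M" "\<forall>c\<in>K. alternating M c" "F \<subseteq> M" unfolding clar_set_def by blast+
      define A where "A = {i. i < n \<and> M \<inter> hex_edges (h i) \<noteq> M0 \<inter> hex_edges (h i)}"
      have As: "A \<subseteq> {..<n}" unfolding A_def by blast
      then have AP: "A \<in> P" using inP by blast
      have "\<forall>c\<in>K. M \<inter> hex_edges c = \<phi> A \<inter> hex_edges c"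
      proof
        fix c assume "c \<in> K"
        then obtain i where i: "i < n" "c = h i" unfolding K_def by blast
        have altM: "alternating M (h i)" using M(2) \<open>c \<in> K\<close> i(2) by blast
        show "M \<inter> hex_edges c = \<phi> A \<inter> hex_edges c"
        proof (cases "i \<in> A")
          case True
          then have "M \<inter> hex_edges (h i) \<noteq> M0 \<inter> hex_edges (h i)" unfolding A_def by blast
          then have "M \<inter> hex_edges (h i) = hex_edges (h i) - M0" using alt_two[OF altM alt0[OF i(1)]] by blast
          then show ?thesis using inter[OF i(1) As] True i(2) by simp
        next
          case False
          then have "M \<inter> hex_edges (h i) = M0 \<inter> hex_edges (h i)" unfolding A_def using i(1) by blast
          then show ?thesis using inter[OF i(1) As] False i(2) by simp
        qed
      qed
      moreover have "\<forall>c\<in>K. alternating (\<phi> A) c" unfolding K_def using alt As by blast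
      moreover have "F \<subseteq> \<phi> A"
      proof
        fix e assume "e \<in> F"
        then have "e \<in> M0" "e \<notin> U A" unfolding F_def U_def using As by auto
        then show "e \<in> \<phi> A" unfolding form[OF As] sd_def by blast
      qed
      ultimately have "M = \<phi> A" using uniq[OF M pmP[OF AP]] by blast
      then show "M \<in> W" using img AP by blast
    qed
  qed
  show ?thesis using cc cardK cs by blast
qed


end
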